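(* Let $q\ge 2$ and let $A_1$ be the distance-1 adjacency matrix of the Hamming scheme $H(3,q)$. Then there exist constants $\alpha,\beta$ with $A_1^3=\beta A_1+\alpha(J-A_1)$ if and only if $q=3$. Moreover, for $q=3$, with $A_i$ the distance-$i$ adjacency matrices of $H(3,3)$, $$A_1^3=15A_1+6(J-A_1),\quad A_2^3=69A_2+60(J-A_2),\quad (A_3+I)^3=33(A_3+I)+24(J-A_3-I),$$ so each of $A_1$, $A_2$, $A_3+I$ is the incidence matrix of a symmetric partial geometric design.
   Context: The Hamming scheme $H(d,q)$ has vertex set $S^d$ for a $q$-element set $S$, with $(\mathbf x,\mathbf y)\in R_i$ iff the Hamming distance $\delta(\mathbf x,\mathbf y)=|\{j: x_j\neq y_j\}|$ equals $i$; $A_i$ is the adjacency matrix of $R_i$, $J$ the all-ones matrix. A symmetric partial geometric design with parameters $(v,k;\alpha,\beta)$ is a design with $v$ points, $v$ blocks, block size and replication $k$, whose incidence matrix $N$ satisfies $NN^TN=\beta N+\alpha(J-N)$. *)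

theory Defs
  imports Complex_Main
begin

definition ham_verts :: "nat \<Rightarrow> nat \<Rightarrow> nat list set" where
  "ham_verts d q = {xs. length xs = d \<and> (\<forall>i<d. xs ! i < q)}"

definition ham_dist :: "nat list \<Rightarrow> nat list \<Rightarrow> nat" where
  "ham_dist xs ys = card {j. j < length xs \<and> xs ! j \<noteq> ys ! j}"

definition ham_adj :: "nat \<Rightarrow> nat list \<Rightarrow> nat list \<Rightarrow> real" where
  "ham_adj i xs ys = (if ham_dist xs ys = i then 1 else 0)"

definition idm :: "'a \<Rightarrow> 'a \<Rightarrow> real" where
  "idm x y = (if x = y then 1 else 0)"

definition mmul :: "'a set \<Rightarrow> ('a \<Rightarrow> 'a \<Rightarrow> real) \<Rightarrow> ('a \<Rightarrow> 'a \<Rightarrow> real) \<Rightarrow> 'a \<Rightarrow> 'a \<Rightarrow> real" where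
  "mmul V A B x y = (\<Sum>z\<in>V. A x z * B z y)"

definition mcube :: "'a set \<Rightarrow> ('a \<Rightarrow> 'a \<Rightarrow> real) \<Rightarrow> 'a \<Rightarrow> 'a \<Rightarrow> real" where
  "mcube V A = mmul V (mmul V A A) A"

definition mtrans :: "('a \<Rightarrow> 'b \<Rightarrow> real) \<Rightarrow> 'b \<Rightarrow> 'a \<Rightarrow> real" where
  "mtrans N y x = N x y"

text \<open>Symmetric partial geometric design with parameters (v,k;alpha,beta), given by its
  incidence matrix N whose rows (points) and columns (blocks) are both indexed by P
  (v points, v blocks): N is 0/1, every block has size k, every point has replication k,
  and N N^T N = beta N + alpha (J - N).\<close>
definition sym_pg_design :: "'a set \<Rightarrow> ('a \<Rightarrow> 'a \<Rightarrow> real) \<Rightarrow> nat \<Rightarrow> nat \<Rightarrow> real \<Rightarrow> real \<Rightarrow> bool" where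
  "sym_pg_design P N v k \<alpha> \<beta> \<longleftrightarrow>
     finite P \<and> card P = v \<and>
     (\<forall>x\<in>P. \<forall>y\<in>P. N x y = 0 \<or> N x y = 1) \<and>
     (\<forall>x\<in>P. (\<Sum>y\<in>P. N x y) = real k) \<and>
     (\<forall>y\<in>P. (\<Sum>x\<in>P. N x y) = real k) \<and>
     (\<forall>x\<in>P. \<forall>y\<in>P. mmul P (mmul P N (mtrans N)) N x y = \<beta> * N x y + \<alpha> * (1 - N x y))"

end

theory Submission
  imports Defs
begin

lemma lt3: "(i::nat) < 3 \<longleftrightarrow> i = 0 \<or> i = 1 \<or> i = 2" by auto

lemma verts3: "ham_verts 3 q = (\<lambda>(a,b,c). [a,b,c]) ` ({..<q} \<times> {..<q} \<times> {..<q})"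
proof (rule set_eqI)
  fix xs show "xs \<in> ham_verts 3 q \<longleftrightarrow> xs \<in> (\<lambda>(a,b,c). [a,b,c]) ` ({..<q} \<times> {..<q} \<times> {..<q})"
  proof
    assume h: "xs \<in> ham_verts 3 q"
    then have l: "length xs = 3" and lt: "\<forall>i<3. xs ! i < q" by (auto simp: ham_verts_def)
    from l obtain a b c where e: "xs = [a,b,c]"
      by (auto simp: numeral_3_eq_3 length_Suc_conv)
    from lt have "a < q" "b < q" "c < q" unfolding e lt3 by auto
    then show "xs \<in> (\<lambda>(a,b,c). [a,b,c]) ` ({..<q} \<times> {..<q} \<times> {..<q})"
      unfolding e by (intro image_eqI[where x="(a,b,c)"]) auto
  next
    assume "xs \<in> (\<lambda>(a,b,c). [a,b,c]) ` ({..<q} \<times> {..<q} \<times> {..<q})"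
    then obtain a b c where e: "xs = [a,b,c]" "a < q" "b < q" "c < q" by auto
    then show "xs \<in> ham_verts 3 q" unfolding ham_verts_def lt3 by auto
  qed
qed

lemma inj3: "inj (\<lambda>(a::nat,b::nat,c::nat). [a,b,c])"
  by (auto simp: inj_def)

lemma inj3': "inj_on (\<lambda>(a::nat,b::nat,c::nat). [a,b,c]) S"
  by (auto simp: inj_on_def)

lemma sum_verts3: "(\<Sum>z\<in>ham_verts 3 q. F z) = (\<Sum>a<q. \<Sum>b<q. \<Sum>c<q. F [a,b,c])"
  unfolding verts3
  by (subst sum.reindex[OF inj3']) (simp add: sum.cartesian_product split_beta)

lemma card_verts3: "card (ham_verts 3 q) = q^3" "finite (ham_verts 3 q)"
  unfolding verts3 by (auto simp: card_image[OF inj3'] card_cartesian_product power3_eq_cube)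

lemma dist3: "length x = 3 \<Longrightarrow> ham_dist x y = of_bool (x!0 \<noteq> y!0) + of_bool (x!1 \<noteq> y!1) + of_bool (x!2 \<noteq> y!2)"
proof -
  assume "length x = 3"
  then have e: "{j. j < length x \<and> x ! j \<noteq> y ! j} = {..<3} \<inter> {j. x ! j \<noteq> y ! j}"
    by auto
  have "card ({..<3::nat} \<inter> {j. x ! j \<noteq> y ! j}) = (\<Sum>j<3. of_bool (x ! j \<noteq> y ! j))"
    by simp
  also have "\<dots> = of_bool (x!0 \<noteq> y!0) + of_bool (x!1 \<noteq> y!1) + of_bool (x!2 \<noteq> y!2)"
    by (simp add: eval_nat_numeral)
  finally show ?thesis unfolding ham_dist_def e .
qed

lemma sum_verts3': "(\<Sum>z\<in>ham_verts 3 q. F z) = (\<Sum>t\<in>{..<q} \<times> {..<q} \<times> {..<q}. F [fst t, fst (snd t), snd (snd t)])"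
  unfolding verts3
  by (subst sum.reindex[OF inj3']) (simp add: split_beta)

lemma sum_prod3: "sum F (A \<times> B \<times> C) = (\<Sum>a\<in>A. \<Sum>b\<in>B. \<Sum>c\<in>C. F (a,b,c))"
  by (simp add: sum.cartesian_product)

lemma sum_fact3: fixes f g h :: "'x \<Rightarrow> real" shows "(\<Sum>t\<in>A \<times> B \<times> C. f (fst t) * g (fst (snd t)) * h (snd (snd t))) = sum f A * sum g B * sum h C"
proof -
  have "(\<Sum>a\<in>A. \<Sum>b\<in>B. \<Sum>c\<in>C. f a * g b * h c) = (\<Sum>a\<in>A. \<Sum>b\<in>B. (f a * g b) * sum h C)"
    by (simp only: sum_distrib_left)
  also have "\<dots> = (\<Sum>a\<in>A. \<Sum>b\<in>B. f a * g b) * sum h C"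
    by (simp add: sum_distrib_right)
  also have "\<dots> = sum f A * sum g B * sum h C"
    by (simp add: sum_product)
  finally show ?thesis unfolding sum_prod3 by simp
qed

definition nn :: "nat \<Rightarrow> bool \<Rightarrow> bool \<Rightarrow> bool \<Rightarrow> real" where
  "nn q p r s = (if p then (if r \<and> s then 1 else if \<not>r \<and> \<not>s then real q - 1 else 0)
                 else (if r \<and> s then 0 else if r \<or> s then 1 else real q - 2))"

lemma nn_sum: assumes "a < q" "b < q"
  shows "(\<Sum>c<q. of_bool ((a = c) = r) * of_bool ((c = b) = s)) = nn q (a = b) r s"
proof -
  have "(\<Sum>c<q. of_bool ((a = c) = r) * of_bool ((c = b) = s)) = (\<Sum>c<q. of_bool ((a = c) = r \<and> (c = b) = s) :: real)"
    by (simp add: of_bool_conj)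
  also have "\<dots> = real (card ({..<q} \<inter> {c. (a = c) = r \<and> (c = b) = s}))"
    by (subst sum_of_bool_eq) auto
  also have "\<dots> = nn q (a = b) r s"
  proof (cases "a = b")
    case True
    show ?thesis
    proof (cases r; cases s)
      assume "r" "s" then have "{..<q} \<inter> {c. (a = c) = r \<and> (c = b) = s} = {a}" using True assms by auto
      then show ?thesis using True \<open>r\<close> \<open>s\<close> by (simp add: nn_def)
    next
      assume "r" "\<not>s" then have "{..<q} \<inter> {c. (a = c) = r \<and> (c = b) = s} = {}" using True assms by auto
      then show ?thesis using True \<open>r\<close> \<open>\<not>s\<close> by (simp add: nn_def)
    next
      assume "\<not>r" "s" then have "{..<q} \<inter> {c. (a = c) = r \<and> (c = b) = s} = {}" using True assms by auto
      then show ?thesis using True \<open>\<not>r\<close> \<open>s\<close> by (simp add: nn_def)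
    next
      assume "\<not>r" "\<not>s" then have "{..<q} \<inter> {c. (a = c) = r \<and> (c = b) = s} = {..<q} - {a}" using True assms by auto
      then show ?thesis using True \<open>\<not>r\<close> \<open>\<not>s\<close> assms by (simp add: nn_def of_nat_diff)
    qed
  next
    case False
    show ?thesis
    proof (cases r; cases s)
      assume "r" "s" then have "{..<q} \<inter> {c. (a = c) = r \<and> (c = b) = s} = {}" using False assms by auto
      then show ?thesis using False \<open>r\<close> \<open>s\<close> by (simp add: nn_def)
    next
      assume "r" "\<not>s" then have "{..<q} \<inter> {c. (a = c) = r \<and> (c = b) = s} = {a}" using False assms by auto
      then show ?thesis using False \<open>r\<close> \<open>\<not>s\<close> by (simp add: nn_def)
    next
      assume "\<not>r" "s" then have "{..<q} \<inter> {c. (a = c) = r \<and> (c = b) = s} = {b}" using False assms by auto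
      then show ?thesis using False \<open>\<not>r\<close> \<open>s\<close> by (simp add: nn_def)
    next
      assume "\<not>r" "\<not>s" then have "{..<q} \<inter> {c. (a = c) = r \<and> (c = b) = s} = {..<q} - {a,b}" using False assms by auto
      moreover have "card ({..<q} - {a,b}) = q - 2" using False assms by (subst card_Diff_subset) auto
      moreover have "q \<ge> 2" using False assms by linarith
      ultimately show ?thesis using False \<open>\<not>r\<close> \<open>\<not>s\<close> by (simp add: nn_def of_nat_diff)
    qed
  qed
  finally show ?thesis .
qed

definition Bm :: "(bool \<times> bool \<times> bool \<Rightarrow> real) \<Rightarrow> nat list \<Rightarrow> nat list \<Rightarrow> real" where
  "Bm c x y = c (x!0 = y!0, x!1 = y!1, x!2 = y!2)"

definition prodB :: "nat \<Rightarrow> (bool \<times> bool \<times> bool \<Rightarrow> real) \<Rightarrow> (bool \<times> bool \<times> bool \<Rightarrow> real) \<Rightarrow> bool \<times> bool \<times> bool \<Rightarrow> real" where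
  "prodB q c c' p = (\<Sum>r\<in>UNIV. \<Sum>s\<in>UNIV. c r * c' s * (nn q (fst p) (fst r) (fst s) *
      nn q (fst (snd p)) (fst (snd r)) (fst (snd s)) * nn q (snd (snd p)) (snd (snd r)) (snd (snd s))))"

lemma expand_c: fixes c :: "bool \<times> bool \<times> bool \<Rightarrow> real" shows "c p = (\<Sum>r\<in>UNIV. c r * (of_bool (fst p = fst r) * of_bool (fst (snd p) = fst (snd r)) * of_bool (snd (snd p) = snd (snd r))))"
proof -
  have "\<And>r. (of_bool (fst p = fst r) * of_bool (fst (snd p) = fst (snd r)) * of_bool (snd (snd p) = snd (snd r)) :: real) = of_bool (r = p)"
    by (auto simp: prod_eq_iff)
  moreover have "\<And>r. c r * of_bool (r = p) = (if r = p then c r else 0)" by simp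
  ultimately show ?thesis by (simp add: sum.delta)
qed

lemma in_verts3: "x \<in> ham_verts 3 q \<Longrightarrow> \<exists>a b c. x = [a,b,c] \<and> a < q \<and> b < q \<and> c < q"
  unfolding verts3 by auto

lemma mmul_Bm:
  assumes "x \<in> ham_verts 3 q" "y \<in> ham_verts 3 q"
  shows "mmul (ham_verts 3 q) (Bm c) (Bm c') x y = Bm (prodB q c c') x y"
proof -
  obtain x0 x1 x2 where x: "x = [x0,x1,x2]" "x0 < q" "x1 < q" "x2 < q" using in_verts3[OF assms(1)] by blast
  obtain y0 y1 y2 where y: "y = [y0,y1,y2]" "y0 < q" "y1 < q" "y2 < q" using in_verts3[OF assms(2)] by blast
  define T where "T = {..<q} \<times> {..<q} \<times> {..<q}"
  define X where "X t r = (of_bool ((x0 = fst t) = fst r) * of_bool ((x1 = fst (snd t)) = fst (snd r)) * of_bool ((x2 = snd (snd t)) = snd (snd r)) :: real)" for t :: "nat \<times> nat \<times> nat" and r :: "bool \<times> bool \<times> bool"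
  define Y where "Y t s = (of_bool ((fst t = y0) = fst s) * of_bool ((fst (snd t) = y1) = fst (snd s)) * of_bool ((snd (snd t) = y2) = snd (snd s)) :: real)" for t :: "nat \<times> nat \<times> nat" and s :: "bool \<times> bool \<times> bool"
  have "mmul (ham_verts 3 q) (Bm c) (Bm c') x y = (\<Sum>t\<in>T. c (x0 = fst t, x1 = fst (snd t), x2 = snd (snd t)) * c' (fst t = y0, fst (snd t) = y1, snd (snd t) = y2))"
    unfolding mmul_def sum_verts3' T_def by (simp add: Bm_def x y)
  also have "\<dots> = (\<Sum>t\<in>T. (\<Sum>r\<in>UNIV. c r * X t r) * (\<Sum>s\<in>UNIV. c' s * Y t s))"
    by (subst expand_c[of c], subst expand_c[of c']) (simp add: X_def Y_def)
  also have "\<dots> = (\<Sum>t\<in>T. \<Sum>r\<in>UNIV. \<Sum>s\<in>UNIV. c r * c' s * (X t r * Y t s))"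
    by (simp add: sum_product ac_simps)
  also have "\<dots> = (\<Sum>r\<in>UNIV. \<Sum>s\<in>UNIV. \<Sum>t\<in>T. c r * c' s * (X t r * Y t s))"
    by (subst sum.swap) (simp add: sum.swap[of _ T])
  also have "\<dots> = (\<Sum>r\<in>UNIV. \<Sum>s\<in>UNIV. c r * c' s * (\<Sum>t\<in>T. X t r * Y t s))"
    by (simp add: sum_distrib_left)
  also have "\<dots> = (\<Sum>r\<in>UNIV. \<Sum>s\<in>UNIV. c r * c' s * (nn q (x0 = y0) (fst r) (fst s) *
      nn q (x1 = y1) (fst (snd r)) (fst (snd s)) * nn q (x2 = y2) (snd (snd r)) (snd (snd s))))"
  proof (intro sum.cong refl arg_cong2[where f="(*)"])
    fix r s :: "bool \<times> bool \<times> bool"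
    have "(\<Sum>t\<in>T. X t r * Y t s) = (\<Sum>t\<in>T. (of_bool ((x0 = fst t) = fst r) * of_bool ((fst t = y0) = fst s))
        * (of_bool ((x1 = fst (snd t)) = fst (snd r)) * of_bool ((fst (snd t) = y1) = fst (snd s)))
        * (of_bool ((x2 = snd (snd t)) = snd (snd r)) * of_bool ((snd (snd t) = y2) = snd (snd s))))"
      by (simp add: X_def Y_def ac_simps)
    also have "\<dots> = nn q (x0 = y0) (fst r) (fst s) *
      nn q (x1 = y1) (fst (snd r)) (fst (snd s)) * nn q (x2 = y2) (snd (snd r)) (snd (snd s))"
      unfolding T_def
      by (subst sum_fact3[where f="\<lambda>a. of_bool ((x0 = a) = fst r) * of_bool ((a = y0) = fst s)"
            and g="\<lambda>a. of_bool ((x1 = a) = fst (snd r)) * of_bool ((a = y1) = fst (snd s))"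
            and h="\<lambda>a. of_bool ((x2 = a) = snd (snd r)) * of_bool ((a = y2) = snd (snd s))"])
         (simp only: nn_sum[OF x(2) y(2)] nn_sum[OF x(3) y(3)] nn_sum[OF x(4) y(4)])
    finally show "(\<Sum>t\<in>T. X t r * Y t s) = nn q (x0 = y0) (fst r) (fst s) *
      nn q (x1 = y1) (fst (snd r)) (fst (snd s)) * nn q (x2 = y2) (snd (snd r)) (snd (snd s))" .
  qed
  also have "\<dots> = Bm (prodB q c c') x y"
    by (simp add: Bm_def prodB_def x y)
  finally show ?thesis .
qed

definition cnt :: "bool \<times> bool \<times> bool \<Rightarrow> nat" where
  "cnt p = of_bool (\<not> fst p) + of_bool (\<not> fst (snd p)) + of_bool (\<not> snd (snd p))"

definition tab :: "real list \<Rightarrow> bool \<times> bool \<times> bool \<Rightarrow> real" where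
  "tab l p = l ! cnt p"

lemma sum_UNIV3: "(\<Sum>r\<in>(UNIV::(bool\<times>bool\<times>bool) set). F r) = (\<Sum>a\<in>UNIV. \<Sum>b\<in>UNIV. \<Sum>c\<in>UNIV. F (a,b,c))"
  using sum_prod3[of F UNIV UNIV UNIV] by simp

lemma all_p3: "(\<And>a b c. P (a,b,c)) \<Longrightarrow> P p" by (cases p) auto

lemma prodB_tab:
  "prodB q (tab l) (tab m) p = (\<Sum>r\<in>UNIV. \<Sum>s\<in>UNIV. tab l r * tab m s * (nn q (fst p) (fst r) (fst s) *
      nn q (fst (snd p)) (fst (snd r)) (fst (snd s)) * nn q (snd (snd p)) (snd (snd r)) (snd (snd s))))"
  by (simp add: prodB_def)

lemma A1_sq: "prodB q (tab [0,1,0,0]) (tab [0,1,0,0]) = tab [3*(real q-1), real q-2, 2, 0]"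
  by (rule ext, rule all_p3) (auto simp: prodB_def sum_UNIV3 UNIV_bool nn_def tab_def cnt_def algebra_simps)

lemma A1_cube: "prodB q (tab [3*(real q-1), real q-2, 2, 0]) (tab [0,1,0,0]) = tab [3*(real q-1)*(real q-2), (real q)^2+3*real q-3, 6*(real q-2), 6]"
  by (rule ext, rule all_p3) (auto simp: prodB_def sum_UNIV3 UNIV_bool nn_def tab_def cnt_def algebra_simps power2_eq_square)

lemma A2_sq: "prodB 3 (tab [0,0,1,0]) (tab [0,0,1,0]) = tab [12,4,5,6]"
  by (rule ext, rule all_p3) (auto simp: prodB_def sum_UNIV3 UNIV_bool nn_def tab_def cnt_def)

lemma A2_cube: "prodB 3 (tab [12,4,5,6]) (tab [0,0,1,0]) = tab [60,60,69,60]"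
  by (rule ext, rule all_p3) (auto simp: prodB_def sum_UNIV3 UNIV_bool nn_def tab_def cnt_def)

lemma A3_sq: "prodB 3 (tab [1,0,0,1]) (tab [1,0,0,1]) = tab [9,4,2,3]"
  by (rule ext, rule all_p3) (auto simp: prodB_def sum_UNIV3 UNIV_bool nn_def tab_def cnt_def)

lemma A3_cube: "prodB 3 (tab [9,4,2,3]) (tab [1,0,0,1]) = tab [33,24,24,33]"
  by (rule ext, rule all_p3) (auto simp: prodB_def sum_UNIV3 UNIV_bool nn_def tab_def cnt_def)

lemma mcube_cong:
  assumes "x \<in> V" "y \<in> V" "\<And>u v. u \<in> V \<Longrightarrow> v \<in> V \<Longrightarrow> A u v = A' u v"
  shows "mcube V A x y = mcube V A' x y"
  unfolding mcube_def mmul_def by (intro sum.cong refl arg_cong2[where f="(*)"]) (simp_all add: assms)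

lemma mcube_Bm:
  assumes "x \<in> ham_verts 3 q" "y \<in> ham_verts 3 q"
  shows "mcube (ham_verts 3 q) (Bm c) x y = Bm (prodB q (prodB q c c) c) x y"
proof -
  have "mcube (ham_verts 3 q) (Bm c) x y = mmul (ham_verts 3 q) (Bm (prodB q c c)) (Bm c) x y"
    unfolding mcube_def mmul_def[of "ham_verts 3 q" "mmul (ham_verts 3 q) (Bm c) (Bm c)"]
      mmul_def[of "ham_verts 3 q" "Bm (prodB q c c)"]
    by (intro sum.cong refl arg_cong2[where f="(*)"]) (simp add: mmul_Bm assms)
  also have "\<dots> = Bm (prodB q (prodB q c c) c) x y" using assms by (rule mmul_Bm)
  finally show ?thesis .
qed

lemma adj_Bm:
  assumes "x \<in> ham_verts 3 q" "y \<in> ham_verts 3 q"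
  shows "ham_adj 1 x y = Bm (tab [0,1,0,0]) x y" "ham_adj 2 x y = Bm (tab [0,0,1,0]) x y"
    "ham_adj 3 x y + idm x y = Bm (tab [1,0,0,1]) x y"
proof -
  obtain x0 x1 x2 where x: "x = [x0,x1,x2]" using in_verts3[OF assms(1)] by blast
  obtain y0 y1 y2 where y: "y = [y0,y1,y2]" using in_verts3[OF assms(2)] by blast
  have d: "ham_dist x y = of_bool (x0 \<noteq> y0) + of_bool (x1 \<noteq> y1) + of_bool (x2 \<noteq> y2)"
    using dist3[of x y] x y by simp
  show "ham_adj 1 x y = Bm (tab [0,1,0,0]) x y" "ham_adj 2 x y = Bm (tab [0,0,1,0]) x y"
    "ham_adj 3 x y + idm x y = Bm (tab [1,0,0,1]) x y"
    unfolding ham_adj_def d idm_def Bm_def tab_def cnt_def using x y by auto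
qed

lemma Bm_sym: "Bm c x y = Bm c y x"
  unfolding Bm_def by (simp add: eq_commute)

lemma rowsum_Bm:
  assumes "x \<in> ham_verts 3 q"
  shows "(\<Sum>y\<in>ham_verts 3 q. Bm c x y) = prodB q c (tab [1,1,1,1]) (True,True,True)"
proof -
  have "(\<Sum>y\<in>ham_verts 3 q. Bm c x y) = mmul (ham_verts 3 q) (Bm c) (Bm (tab [1,1,1,1])) x x"
    unfolding mmul_def by (intro sum.cong refl) (auto simp: Bm_def tab_def cnt_def)
  also have "\<dots> = prodB q c (tab [1,1,1,1]) (True,True,True)"
    using assms by (simp add: mmul_Bm Bm_def)
  finally show ?thesis .
qed

lemma colsum_Bm:
  assumes "y \<in> ham_verts 3 q"
  shows "(\<Sum>x\<in>ham_verts 3 q. Bm c x y) = prodB q (tab [1,1,1,1]) c (True,True,True)"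
proof -
  have "(\<Sum>x\<in>ham_verts 3 q. Bm c x y) = mmul (ham_verts 3 q) (Bm (tab [1,1,1,1])) (Bm c) y y"
    unfolding mmul_def by (intro sum.cong refl) (auto simp: Bm_def tab_def cnt_def)
  also have "\<dots> = prodB q (tab [1,1,1,1]) c (True,True,True)"
    using assms by (simp add: mmul_Bm Bm_def)
  finally show ?thesis .
qed

lemma pg_gen:
  fixes N :: "nat list \<Rightarrow> nat list \<Rightarrow> real" and l :: "real list"
  defines "V \<equiv> ham_verts 3 3"
  assumes NB: "\<And>x y. x \<in> V \<Longrightarrow> y \<in> V \<Longrightarrow> N x y = Bm (tab l) x y"
    and l01: "\<forall>p. tab l p = 0 \<or> tab l p = 1"
    and r: "prodB 3 (tab l) (tab [1,1,1,1]) (True,True,True) = real k"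
    and c: "prodB 3 (tab [1,1,1,1]) (tab l) (True,True,True) = real k"
    and cube: "\<forall>x\<in>V. \<forall>y\<in>V. mcube V N x y = \<beta> * N x y + \<alpha> * (1 - N x y)"
  shows "sym_pg_design V N 27 k \<alpha> \<beta>"
  unfolding sym_pg_design_def
proof (intro conjI ballI)
  show "finite V" "card V = 27" unfolding V_def using card_verts3[of 3] by auto
next
  fix x y assume x: "x \<in> V" and y: "y \<in> V"
  have "N x y = Bm (tab l) x y" by (rule NB[OF x y])
  moreover have "Bm (tab l) x y = 0 \<or> Bm (tab l) x y = 1" unfolding Bm_def by (rule l01[rule_format])
  ultimately show "N x y = 0 \<or> N x y = 1" by simp
next
  fix x assume x: "x \<in> V"
  have "(\<Sum>y\<in>V. N x y) = (\<Sum>y\<in>V. Bm (tab l) x y)" by (rule sum.cong[OF refl], rule NB[OF x])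
  also have "\<dots> = real k" unfolding V_def by (rule trans[OF rowsum_Bm r]) (use x V_def in simp)
  finally show "(\<Sum>y\<in>V. N x y) = real k" .
next
  fix y assume y: "y \<in> V"
  have "(\<Sum>x\<in>V. N x y) = (\<Sum>x\<in>V. Bm (tab l) x y)" by (rule sum.cong[OF refl], rule NB[OF _ y])
  also have "\<dots> = real k" unfolding V_def by (rule trans[OF colsum_Bm c]) (use y V_def in simp)
  finally show "(\<Sum>x\<in>V. N x y) = real k" .
next
  fix x y assume x: "x \<in> V" and y: "y \<in> V"
  have sym: "N u v = N v u" if "u \<in> V" "v \<in> V" for u v
  proof -
    have "N u v = Bm (tab l) u v" by (rule NB[OF that])
    also have "\<dots> = Bm (tab l) v u" by (rule Bm_sym)
    also have "\<dots> = N v u" by (rule NB[OF that(2,1), symmetric])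
    finally show ?thesis .
  qed
  have inner: "mmul V N (mtrans N) x z = mmul V N N x z" if z: "z \<in> V" for z
    unfolding mmul_def mtrans_def
  proof (rule sum.cong[OF refl])
    fix w assume "w \<in> V" then show "N x w * N z w = N x w * N w z" using sym[OF z] by simp
  qed
  have "mmul V (mmul V N (mtrans N)) N x y = mcube V N x y"
    unfolding mcube_def mmul_def[of V "mmul V N (mtrans N)"] mmul_def[of V "mmul V N N"]
    by (rule sum.cong[OF refl]) (simp add: inner)
  then show "mmul V (mmul V N (mtrans N)) N x y = \<beta> * N x y + \<alpha> * (1 - N x y)" using cube x y by simp
qed

lemma cnt_cases: "cnt p = 0 \<or> cnt p = 1 \<or> cnt p = 2 \<or> cnt p = 3"
  by (cases p) (auto simp: cnt_def)

lemma tab_lin: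
  assumes "l3!0 = b * l!0 + a * (1 - l!0)" "l3!1 = b * l!1 + a * (1 - l!1)"
    "l3!2 = b * l!2 + a * (1 - l!2)" "l3!3 = b * l!3 + a * (1 - l!3)"
  shows "tab l3 p = b * tab l p + a * (1 - tab l p)"
  using cnt_cases[of p] assms unfolding tab_def by auto

lemma tab01:
  assumes "\<forall>i\<in>{0,1,2,3}. l!i = 0 \<or> l!i = 1"
  shows "\<forall>p. tab l p = 0 \<or> tab l p = 1"
proof
  fix p show "tab l p = 0 \<or> tab l p = 1" using cnt_cases[of p] assms unfolding tab_def by auto
qed

lemma cube_general:
  fixes A :: "nat list \<Rightarrow> nat list \<Rightarrow> real"
  assumes AB: "\<And>x y. x \<in> ham_verts 3 q \<Longrightarrow> y \<in> ham_verts 3 q \<Longrightarrow> A x y = Bm (tab l) x y"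
    and sq: "prodB q (tab l) (tab l) = tab l2" and cb: "prodB q (tab l2) (tab l) = tab l3"
    and x: "x \<in> ham_verts 3 q" and y: "y \<in> ham_verts 3 q"
  shows "mcube (ham_verts 3 q) A x y = Bm (tab l3) x y"
proof -
  have "mcube (ham_verts 3 q) A x y = mcube (ham_verts 3 q) (Bm (tab l)) x y"
    by (rule mcube_cong[OF x y AB])
  also have "\<dots> = Bm (tab l3) x y" using mcube_Bm[OF x y] sq cb by simp
  finally show ?thesis .
qed

lemma pgdesign_from_tab:
  fixes A :: "nat list \<Rightarrow> nat list \<Rightarrow> real"
  assumes AB: "\<And>x y. x \<in> ham_verts 3 3 \<Longrightarrow> y \<in> ham_verts 3 3 \<Longrightarrow> A x y = Bm (tab l) x y"
    and sq: "prodB 3 (tab l) (tab l) = tab l2" and cb: "prodB 3 (tab l2) (tab l) = tab l3"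
    and lin: "\<forall>p. tab l3 p = \<beta> * tab l p + \<alpha> * (1 - tab l p)"
  shows "\<forall>x\<in>ham_verts 3 3. \<forall>y\<in>ham_verts 3 3. mcube (ham_verts 3 3) A x y = \<beta> * A x y + \<alpha> * (1 - A x y)"
proof (intro ballI)
  fix x y assume x: "x \<in> ham_verts 3 3" and y: "y \<in> ham_verts 3 3"
  have "mcube (ham_verts 3 3) A x y = Bm (tab l3) x y" by (rule cube_general[OF AB sq cb x y])
  then show "mcube (ham_verts 3 3) A x y = \<beta> * A x y + \<alpha> * (1 - A x y)"
    using lin AB[OF x y] unfolding Bm_def by simp
qed

lemma const_in: "a < q \<Longrightarrow> [a,a,a] \<in> ham_verts 3 q"
  unfolding ham_verts_def lt3 by auto

theorem proposition6p1:
  fixes q :: nat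
  assumes "q \<ge> 2"
  shows "((\<exists>\<alpha> \<beta> :: real. \<forall>x\<in>ham_verts 3 q. \<forall>y\<in>ham_verts 3 q.
            mcube (ham_verts 3 q) (ham_adj 1) x y = \<beta> * ham_adj 1 x y + \<alpha> * (1 - ham_adj 1 x y))
         \<longleftrightarrow> q = 3)
    \<and> (\<forall>x\<in>ham_verts 3 3. \<forall>y\<in>ham_verts 3 3.
            mcube (ham_verts 3 3) (ham_adj 1) x y = 15 * ham_adj 1 x y + 6 * (1 - ham_adj 1 x y))
    \<and> (\<forall>x\<in>ham_verts 3 3. \<forall>y\<in>ham_verts 3 3.
            mcube (ham_verts 3 3) (ham_adj 2) x y = 69 * ham_adj 2 x y + 60 * (1 - ham_adj 2 x y))
    \<and> (\<forall>x\<in>ham_verts 3 3. \<forall>y\<in>ham_verts 3 3.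
            mcube (ham_verts 3 3) (\<lambda>u v. ham_adj 3 u v + idm u v) x y
              = 33 * (ham_adj 3 x y + idm x y) + 24 * (1 - ham_adj 3 x y - idm x y))
    \<and> (\<exists>k. sym_pg_design (ham_verts 3 3) (ham_adj 1) 27 k 6 15)
    \<and> (\<exists>k. sym_pg_design (ham_verts 3 3) (ham_adj 2) 27 k 60 69)
    \<and> (\<exists>k. sym_pg_design (ham_verts 3 3) (\<lambda>u v. ham_adj 3 u v + idm u v) 27 k 24 33)"
proof -
  have B1: "\<And>x y. x \<in> ham_verts 3 3 \<Longrightarrow> y \<in> ham_verts 3 3 \<Longrightarrow> ham_adj 1 x y = Bm (tab [0,1,0,0]) x y"
    by (rule adj_Bm(1))
  have Bq: "\<And>x y. x \<in> ham_verts 3 q \<Longrightarrow> y \<in> ham_verts 3 q \<Longrightarrow> ham_adj 1 x y = Bm (tab [0,1,0,0]) x y"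
    by (rule adj_Bm(1))
  have B2: "\<And>x y. x \<in> ham_verts 3 3 \<Longrightarrow> y \<in> ham_verts 3 3 \<Longrightarrow> ham_adj 2 x y = Bm (tab [0,0,1,0]) x y"
    by (rule adj_Bm(2))
  have B3: "\<And>x y. x \<in> ham_verts 3 3 \<Longrightarrow> y \<in> ham_verts 3 3 \<Longrightarrow> ham_adj 3 x y + idm x y = Bm (tab [1,0,0,1]) x y"
    by (rule adj_Bm(3))
  have sq3: "prodB 3 (tab [0,1,0,0]) (tab [0,1,0,0]) = tab [6, 1, 2, 0]"
    using A1_sq[of 3] by simp
  have cb3: "prodB 3 (tab [6, 1, 2, 0]) (tab [0,1,0,0]) = tab [6, 15, 6, 6]"
    using A1_cube[of 3] by (simp add: power2_eq_square)
  have E1: "\<forall>x\<in>ham_verts 3 3. \<forall>y\<in>ham_verts 3 3.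
            mcube (ham_verts 3 3) (ham_adj 1) x y = 15 * ham_adj 1 x y + 6 * (1 - ham_adj 1 x y)"
    by (rule pgdesign_from_tab[OF B1 sq3 cb3], assumption, assumption) (intro allI tab_lin; simp)
  have E2: "\<forall>x\<in>ham_verts 3 3. \<forall>y\<in>ham_verts 3 3.
            mcube (ham_verts 3 3) (ham_adj 2) x y = 69 * ham_adj 2 x y + 60 * (1 - ham_adj 2 x y)"
    by (rule pgdesign_from_tab[OF B2 A2_sq A2_cube], assumption, assumption) (intro allI tab_lin; simp)
  have E3: "\<forall>x\<in>ham_verts 3 3. \<forall>y\<in>ham_verts 3 3.
            mcube (ham_verts 3 3) (\<lambda>u v. ham_adj 3 u v + idm u v) x y
              = 33 * (ham_adj 3 x y + idm x y) + 24 * (1 - (ham_adj 3 x y + idm x y))"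
    by (rule pgdesign_from_tab[where A="\<lambda>u v. ham_adj 3 u v + idm u v", OF B3 A3_sq A3_cube], assumption, assumption) (intro allI tab_lin; simp)
  have P1: "sym_pg_design (ham_verts 3 3) (ham_adj 1) 27 6 6 15"
    by (rule pg_gen[OF B1 _ _ _ E1]) (auto intro!: tab01 simp: prodB_def sum_UNIV3 UNIV_bool nn_def tab_def cnt_def)
  have P2: "sym_pg_design (ham_verts 3 3) (ham_adj 2) 27 12 60 69"
    by (rule pg_gen[OF B2 _ _ _ E2]) (auto intro!: tab01 simp: prodB_def sum_UNIV3 UNIV_bool nn_def tab_def cnt_def)
  have P3: "sym_pg_design (ham_verts 3 3) (\<lambda>u v. ham_adj 3 u v + idm u v) 27 9 24 33"
    by (rule pg_gen[where N="\<lambda>u v. ham_adj 3 u v + idm u v", OF B3 _ _ _ E3]) (auto intro!: tab01 simp: prodB_def sum_UNIV3 UNIV_bool nn_def tab_def cnt_def)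
  have iff: "(\<exists>\<alpha> \<beta> :: real. \<forall>x\<in>ham_verts 3 q. \<forall>y\<in>ham_verts 3 q.
            mcube (ham_verts 3 q) (ham_adj 1) x y = \<beta> * ham_adj 1 x y + \<alpha> * (1 - ham_adj 1 x y))
         \<longleftrightarrow> q = 3"
  proof
    assume "\<exists>\<alpha> \<beta> :: real. \<forall>x\<in>ham_verts 3 q. \<forall>y\<in>ham_verts 3 q.
            mcube (ham_verts 3 q) (ham_adj 1) x y = \<beta> * ham_adj 1 x y + \<alpha> * (1 - ham_adj 1 x y)"
    then obtain \<alpha> \<beta> :: real where H: "\<forall>x\<in>ham_verts 3 q. \<forall>y\<in>ham_verts 3 q.
            mcube (ham_verts 3 q) (ham_adj 1) x y = \<beta> * ham_adj 1 x y + \<alpha> * (1 - ham_adj 1 x y)" by blast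
    have x0: "[0,0,0] \<in> ham_verts 3 q" and x1: "[1,1,1] \<in> ham_verts 3 q"
      using assms by (auto intro!: const_in)
    let ?l3 = "[3*(real q-1)*(real q-2), (real q)^2+3*real q-3, 6*(real q-2), 6]"
    have C: "mcube (ham_verts 3 q) (ham_adj 1) x y = Bm (tab ?l3) x y"
      if "x \<in> ham_verts 3 q" "y \<in> ham_verts 3 q" for x y
      by (rule cube_general[OF Bq A1_sq A1_cube that])
    have a00: "ham_adj 1 [0,0,0] [0,0,0] = 0" and a01: "ham_adj 1 [0,0,0] [1,1,1] = 0"
      using adj_Bm(1)[OF x0 x0] adj_Bm(1)[OF x0 x1] by (simp_all add: Bm_def tab_def cnt_def)
    have "3*(real q-1)*(real q-2) = \<alpha>"
      using H[rule_format, OF x0 x0] C[OF x0 x0] a00 by (simp add: Bm_def tab_def cnt_def)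
    moreover have "6 = \<alpha>"
      using H[rule_format, OF x0 x1] C[OF x0 x1] a01 by (simp add: Bm_def tab_def cnt_def)
    ultimately have "real q * (real q - 3) = 0" by (simp add: algebra_simps)
    then have "real q = 3" using assms by auto
    then show "q = 3" by simp
  next
    assume "q = 3"
    then show "\<exists>\<alpha> \<beta> :: real. \<forall>x\<in>ham_verts 3 q. \<forall>y\<in>ham_verts 3 q.
            mcube (ham_verts 3 q) (ham_adj 1) x y = \<beta> * ham_adj 1 x y + \<alpha> * (1 - ham_adj 1 x y)"
      using E1 by blast
  qed
  show ?thesis using iff E1 E2 E3 P1 P2 P3 by (auto simp: algebra_simps)
qed

end
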